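(* Let $A\ge1$, $B>0$, $C\ge0$ be real numbers, $U\subset(0,1)^d$ open, and let $f:U\to\mathbb{R}$ be a map such that $f$ and all first-order partial derivatives $\partial f/\partial x_i$ ($i=1,\dots,d$) are weakly $(A,B,C)$-mild. Let $r>0$ be an integer, let $n_1,\ldots,n_d$ be integers with $n_i\ge r$ for all $i$, define $\phi:(0,1)^d\to(0,1)^d$ by $\phi(x_1,\ldots,x_d)=(x_1^{n_1},\ldots,x_d^{n_d})$, and let $V=\phi^{-1}(U)$. Then $f\circ\phi:V\to\mathbb{R}$ is $(\tilde A,B,C)$-mild up to order $r$, where $\tilde A=NA(d+1)^{C+1}$ and $N=\max(n_1,\ldots,n_d)$.
   Context: For $W\subset(0,1)^d$ open, $g:W\to\mathbb{R}$ is weakly $(A,B,C)$-mild if it is $C^\infty$ and $|g^{(\nu)}(x)|\le B^{C+1}A^{|\nu|}|\nu|!^{C+1}/x^\nu$ for all $x\in W$ and all $\nu\in\mathbb{N}^d$. For $W$ open, $h:W\to\mathbb{R}$ is $(A,B,C)$-mild up to order $r$ if it is $C^r$ and $|h^{(\nu)}(x)|\le B^{C+1}A^{|\nu|}|\nu|!^{C+1}$ for all $x\in W$ and $\nu$ with $|\nu|\le r$. Here $g^{(\nu)}=\partial^{|\nu|}g/\partial x_1^{\nu_1}\cdots\partial x_d^{\nu_d}$, $|\nu|=\sum\nu_i$, $x^\nu=\prod x_i^{\nu_i}$. *)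

theory Defs
  imports "HOL-Analysis.Analysis"
begin

definition pd :: "'n::finite \<Rightarrow> (real^'n \<Rightarrow> real) \<Rightarrow> real^'n \<Rightarrow> real" where
  "pd i g x = deriv (\<lambda>t. g (x + t *\<^sub>R axis i 1)) 0"

fun pds :: "'n::finite list \<Rightarrow> (real^'n \<Rightarrow> real) \<Rightarrow> real^'n \<Rightarrow> real" where
  "pds [] g = g"
| "pds (i # is) g = pd i (pds is g)"

definition Ck_on :: "nat \<Rightarrow> (real^'n::finite \<Rightarrow> real) \<Rightarrow> (real^'n) set \<Rightarrow> bool" where
  "Ck_on k g W \<longleftrightarrow>
     (\<forall>is. length is \<le> k \<longrightarrow> continuous_on W (pds is g)) \<and>
     (\<forall>is i x. length is < k \<longrightarrow> x \<in> W \<longrightarrow>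
        (\<lambda>t::real. pds is g (x + t *\<^sub>R axis i 1)) differentiable (at 0))"

definition Cinf_on :: "(real^'n::finite \<Rightarrow> real) \<Rightarrow> (real^'n) set \<Rightarrow> bool" where
  "Cinf_on g W \<longleftrightarrow> (\<forall>k. Ck_on k g W)"

text \<open>Multi-index nu corresponds to any list of directions in which i occurs nu_i times.\<close>
definition weakly_mild :: "real \<Rightarrow> real \<Rightarrow> real \<Rightarrow> (real^'n::finite) set \<Rightarrow> (real^'n \<Rightarrow> real) \<Rightarrow> bool" where
  "weakly_mild A B C W g \<longleftrightarrow> Cinf_on g W \<and>
     (\<forall>is. \<forall>x\<in>W. \<bar>pds is g x\<bar> \<le>
        B powr (C + 1) * A ^ length is * (fact (length is)) powr (C + 1)
          / (\<Prod>i\<in>UNIV. (x $ i) ^ count_list is i))"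

definition mild_upto :: "real \<Rightarrow> real \<Rightarrow> real \<Rightarrow> nat \<Rightarrow> (real^'n::finite) set \<Rightarrow> (real^'n \<Rightarrow> real) \<Rightarrow> bool" where
  "mild_upto A B C r W h \<longleftrightarrow> Ck_on r h W \<and>
     (\<forall>is. length is \<le> r \<longrightarrow> (\<forall>x\<in>W. \<bar>pds is h x\<bar> \<le>
        B powr (C + 1) * A ^ length is * (fact (length is)) powr (C + 1)))"

definition phi :: "('n::finite \<Rightarrow> nat) \<Rightarrow> real^'n \<Rightarrow> real^'n" where
  "phi n x = (\<chi> i. (x $ i) ^ n i)"

end

theory Submission
  imports Defs
begin


lemma pds_append: "pds (a @ b) g = pds a (pds b g)"
  by (induction a) auto

lemma axis_comp: "(y + s *\<^sub>R axis j (1::real)) $ i = y $ i + (if i = j then s else 0)"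
  by (simp add: axis_def)

lemma ev_in_open:
  fixes x :: "real^'n"
  assumes "open W" "x \<in> W"
  shows "eventually (\<lambda>t::real. x + t *\<^sub>R axis i 1 \<in> W) (nhds 0)"
proof -
  obtain d where d: "d > 0" "ball x d \<subseteq> W" using assms open_contains_ball by blast
  show ?thesis unfolding eventually_nhds_metric
  proof (intro exI[of _ d] conjI allI impI)
    fix t :: real assume "dist t 0 < d"
    then have "dist x (x + t *\<^sub>R axis i 1) < d" by (simp add: dist_norm)
    then show "x + t *\<^sub>R axis i 1 \<in> W" using d by auto
  qed (use d in auto)
qed

lemma pd_local:
  assumes "open W" "x \<in> W" "\<forall>z\<in>W. g1 z = g2 z"
  shows "pd i g1 x = pd i g2 x"
  unfolding pd_def
proof (rule deriv_cong_ev)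
  show "\<forall>\<^sub>F t in nhds 0. g1 (x + t *\<^sub>R axis i 1) = g2 (x + t *\<^sub>R axis i 1)"
    using ev_in_open[OF assms(1,2), of i] by (rule eventually_mono) (use assms(3) in auto)
qed simp

lemma pds_local:
  assumes "open W" "\<forall>z\<in>W. g1 z = g2 z" "x \<in> W"
  shows "pds is g1 x = pds is g2 x"
  using assms(3)
proof (induction "is" arbitrary: x)
  case Nil then show ?case using assms by simp
next
  case (Cons a "is")
  then show ?case using pd_local[OF assms(1) Cons.prems] by simp
qed

lemma pd_has_deriv:
  assumes "(\<lambda>t. g (x + t *\<^sub>R axis i 1)) differentiable (at 0)"
  shows "((\<lambda>t. g (x + t *\<^sub>R axis i 1)) has_real_derivative pd i g x) (at 0)"
  using assms unfolding pd_def by (simp add: DERIV_deriv_iff_real_differentiable)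

lemma pd_has_deriv_shift:
  assumes "(\<lambda>t. g (p + \<sigma> *\<^sub>R axis i 1 + t *\<^sub>R axis i 1)) differentiable (at 0)"
  shows "((\<lambda>u. g (p + u *\<^sub>R axis i 1)) has_real_derivative pd i g (p + \<sigma> *\<^sub>R axis i 1)) (at \<sigma>)"
proof -
  have "((\<lambda>t. g (p + \<sigma> *\<^sub>R axis i 1 + t *\<^sub>R axis i 1)) has_real_derivative pd i g (p + \<sigma> *\<^sub>R axis i 1)) (at 0)"
    by (rule pd_has_deriv[OF assms])
  moreover have "(\<lambda>t. g (p + \<sigma> *\<^sub>R axis i 1 + t *\<^sub>R axis i 1)) = (\<lambda>t. g (p + (t + \<sigma>) *\<^sub>R axis i 1))"
    by (simp add: scaleR_add_left add_ac)
  ultimately show ?thesis using DERIV_shift[of "\<lambda>u. g (p + u *\<^sub>R axis i 1)" _ 0 \<sigma>] by simp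
qed

lemma Ck_on_pds:
  assumes "Ck_on (k + length s) h W"
  shows "Ck_on k (pds s h) W"
  using assms unfolding Ck_on_def pds_append[symmetric]
  by (metis add_le_mono1 add_less_mono1 length_append)

lemma Cinf_pds: "Cinf_on h W \<Longrightarrow> Cinf_on (pds s h) W"
  unfolding Cinf_on_def using Ck_on_pds by blast

lemma cinf_cont: "Cinf_on h W \<Longrightarrow> continuous_on W (pds is h)"
  unfolding Cinf_on_def Ck_on_def by (meson order_refl)

lemma cinf_diff: "Cinf_on h W \<Longrightarrow> x \<in> W \<Longrightarrow> (\<lambda>t::real. pds is h (x + t *\<^sub>R axis i 1)) differentiable (at 0)"
  unfolding Cinf_on_def Ck_on_def by (meson lessI)



lemma mvt_rect:
  fixes x :: "real^'n" and h :: "real^'n \<Rightarrow> real"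
  assumes U: "open U" "Cinf_on h U" and s: "s > 0"
    and inU: "\<And>\<sigma> \<tau>. 0 \<le> \<sigma> \<Longrightarrow> \<sigma> \<le> s \<Longrightarrow> 0 \<le> \<tau> \<Longrightarrow> \<tau> \<le> s \<Longrightarrow> x + \<sigma> *\<^sub>R axis a 1 + \<tau> *\<^sub>R axis b 1 \<in> U"
  shows "\<exists>\<sigma> \<tau>. 0 < \<sigma> \<and> \<sigma> < s \<and> 0 < \<tau> \<and> \<tau> < s \<and>
     h (x + s *\<^sub>R axis a 1 + s *\<^sub>R axis b 1) - h (x + s *\<^sub>R axis a 1) - h (x + s *\<^sub>R axis b 1) + h x
       = s * (s * pd b (pd a h) (x + \<sigma> *\<^sub>R axis a 1 + \<tau> *\<^sub>R axis b 1))"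
proof -
  let ?ea = "axis a (1::real)" and ?eb = "axis b (1::real)"
  define F where "F u = h ((x + s *\<^sub>R ?eb) + u *\<^sub>R ?ea) - h (x + u *\<^sub>R ?ea)" for u
  have dF: "(F has_real_derivative (pd a h (x + s *\<^sub>R ?eb + u *\<^sub>R ?ea) - pd a h (x + u *\<^sub>R ?ea))) (at u)"
    if "0 \<le> u" "u \<le> s" for u
  proof -
    have p1: "x + s *\<^sub>R ?eb + u *\<^sub>R ?ea \<in> U" using inU[of u s] that s by (simp add: add_ac)
    have p2: "x + u *\<^sub>R ?ea \<in> U" using inU[of u 0] that s by simp
    have d1: "((\<lambda>u. h ((x + s *\<^sub>R ?eb) + u *\<^sub>R ?ea)) has_real_derivative pd a h (x + s *\<^sub>R ?eb + u *\<^sub>R ?ea)) (at u)"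
      by (rule pd_has_deriv_shift) (use cinf_diff[OF U(2) p1, of "[]" a] in simp)
    have d2: "((\<lambda>u. h (x + u *\<^sub>R ?ea)) has_real_derivative pd a h (x + u *\<^sub>R ?ea)) (at u)"
      by (rule pd_has_deriv_shift) (use cinf_diff[OF U(2) p2, of "[]" a] in simp)
    show ?thesis unfolding F_def by (rule DERIV_diff[OF d1 d2])
  qed
  obtain \<sigma> where \<sigma>: "0 < \<sigma>" "\<sigma> < s" and
    eq1: "F s - F 0 = (s - 0) * (pd a h (x + s *\<^sub>R ?eb + \<sigma> *\<^sub>R ?ea) - pd a h (x + \<sigma> *\<^sub>R ?ea))"
    using MVT2[OF s, of F "\<lambda>u. pd a h (x + s *\<^sub>R ?eb + u *\<^sub>R ?ea) - pd a h (x + u *\<^sub>R ?ea)"] dF by auto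
  define G where "G v = pd a h ((x + \<sigma> *\<^sub>R ?ea) + v *\<^sub>R ?eb)" for v
  have dG: "(G has_real_derivative pd b (pd a h) (x + \<sigma> *\<^sub>R ?ea + v *\<^sub>R ?eb)) (at v)"
    if "0 \<le> v" "v \<le> s" for v
  proof -
    have p: "x + \<sigma> *\<^sub>R ?ea + v *\<^sub>R ?eb \<in> U" using inU[of \<sigma> v] that \<sigma> by simp
    show ?thesis unfolding G_def
      by (rule pd_has_deriv_shift) (use cinf_diff[OF U(2) p, of "[a]" b] in simp)
  qed
  obtain \<tau> where \<tau>: "0 < \<tau>" "\<tau> < s" and
    eq2: "G s - G 0 = (s - 0) * pd b (pd a h) (x + \<sigma> *\<^sub>R ?ea + \<tau> *\<^sub>R ?eb)"
    using MVT2[OF s, of G "\<lambda>v. pd b (pd a h) (x + \<sigma> *\<^sub>R ?ea + v *\<^sub>R ?eb)"] dG by auto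
  have "G s - G 0 = pd a h (x + s *\<^sub>R ?eb + \<sigma> *\<^sub>R ?ea) - pd a h (x + \<sigma> *\<^sub>R ?ea)"
    unfolding G_def by (simp add: add_ac)
  moreover have "F s - F 0 = h (x + s *\<^sub>R ?ea + s *\<^sub>R ?eb) - h (x + s *\<^sub>R ?ea) - h (x + s *\<^sub>R ?eb) + h x"
    unfolding F_def by (simp add: add_ac)
  ultimately show ?thesis using eq1 eq2 \<sigma> \<tau> by (intro exI[of _ \<sigma>] exI[of _ \<tau>]) auto
qed

lemma norm_two_axes:
  fixes x :: "real^'n"
  assumes "0 \<le> \<sigma>" "\<sigma> \<le> s" "0 \<le> \<tau>" "\<tau> \<le> s"
  shows "dist (x + \<sigma> *\<^sub>R axis a 1 + \<tau> *\<^sub>R axis b 1) x \<le> 2 * s"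
proof -
  have "dist (x + \<sigma> *\<^sub>R axis a 1 + \<tau> *\<^sub>R axis b 1) x = norm (\<sigma> *\<^sub>R axis a (1::real) + \<tau> *\<^sub>R axis b 1)"
    by (simp add: dist_norm)
  also have "\<dots> \<le> norm (\<sigma> *\<^sub>R axis a (1::real)) + norm (\<tau> *\<^sub>R axis b (1::real))" by (rule norm_triangle_ineq)
  also have "\<dots> \<le> 2 * s" using assms by simp
  finally show ?thesis .
qed

lemma clairaut:
  fixes x :: "real^'n" and h :: "real^'n \<Rightarrow> real"
  assumes U: "open U" "Cinf_on h U" and x: "x \<in> U"
  shows "pd a (pd b h) x = pd b (pd a h) x"
proof (rule ccontr)
  let ?D1 = "pd b (pd a h)" and ?D2 = "pd a (pd b h)"
  assume ne: "?D2 x \<noteq> ?D1 x"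
  define d where "d = \<bar>?D1 x - ?D2 x\<bar>"
  have d: "d > 0" using ne d_def by auto
  have c1: "continuous_on U ?D1" using cinf_cont[OF U(2), of "[b,a]"] by simp
  have c2: "continuous_on U ?D2" using cinf_cont[OF U(2), of "[a,b]"] by simp
  obtain e1 where e1: "e1 > 0" "\<forall>z\<in>U. dist z x < e1 \<longrightarrow> dist (?D1 z) (?D1 x) < d/2"
    using c1 x d unfolding continuous_on_iff by (meson half_gt_zero)
  obtain e2 where e2: "e2 > 0" "\<forall>z\<in>U. dist z x < e2 \<longrightarrow> dist (?D2 z) (?D2 x) < d/2"
    using c2 x d unfolding continuous_on_iff by (meson half_gt_zero)
  obtain e0 where e0: "e0 > 0" "ball x e0 \<subseteq> U" using U(1) x open_contains_ball by blast
  define s where "s = min e0 (min e1 e2) / 3"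
  have s: "s > 0" using e0 e1 e2 s_def by simp
  have near: "dist (x + \<sigma> *\<^sub>R axis a' 1 + \<tau> *\<^sub>R axis b' 1) x < min e0 (min e1 e2)"
    if "0 \<le> \<sigma>" "\<sigma> \<le> s" "0 \<le> \<tau>" "\<tau> \<le> s" for \<sigma> \<tau> a' b'
    using norm_two_axes[OF that, of x a' b'] s s_def by linarith
  have inU: "x + \<sigma> *\<^sub>R axis a' 1 + \<tau> *\<^sub>R axis b' 1 \<in> U"
    if "0 \<le> \<sigma>" "\<sigma> \<le> s" "0 \<le> \<tau>" "\<tau> \<le> s" for \<sigma> \<tau> a' b'
    using near[OF that, of a' b'] e0 by (auto simp: dist_commute)
  obtain \<sigma>1 \<tau>1 where st1: "0 < \<sigma>1" "\<sigma>1 < s" "0 < \<tau>1" "\<tau>1 < s" and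
    eq1: "h (x + s *\<^sub>R axis a 1 + s *\<^sub>R axis b 1) - h (x + s *\<^sub>R axis a 1) - h (x + s *\<^sub>R axis b 1) + h x
       = s * (s * ?D1 (x + \<sigma>1 *\<^sub>R axis a 1 + \<tau>1 *\<^sub>R axis b 1))"
    using mvt_rect[OF U s inU] by blast
  obtain \<sigma>2 \<tau>2 where st2: "0 < \<sigma>2" "\<sigma>2 < s" "0 < \<tau>2" "\<tau>2 < s" and
    eq2: "h (x + s *\<^sub>R axis b 1 + s *\<^sub>R axis a 1) - h (x + s *\<^sub>R axis b 1) - h (x + s *\<^sub>R axis a 1) + h x
       = s * (s * ?D2 (x + \<sigma>2 *\<^sub>R axis b 1 + \<tau>2 *\<^sub>R axis a 1))"
    using mvt_rect[OF U s inU] by blast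
  have "x + s *\<^sub>R axis b 1 + s *\<^sub>R axis a 1 = x + s *\<^sub>R axis a 1 + s *\<^sub>R axis b (1::real)" by (simp add: add_ac)
  with eq1 eq2 have "s * (s * ?D1 (x + \<sigma>1 *\<^sub>R axis a 1 + \<tau>1 *\<^sub>R axis b 1)) = s * (s * ?D2 (x + \<sigma>2 *\<^sub>R axis b 1 + \<tau>2 *\<^sub>R axis a 1))"
    by (metis (no_types, lifting) add_diff_eq diff_add_eq diff_diff_eq2)
  then have eq: "?D1 (x + \<sigma>1 *\<^sub>R axis a 1 + \<tau>1 *\<^sub>R axis b 1) = ?D2 (x + \<sigma>2 *\<^sub>R axis b 1 + \<tau>2 *\<^sub>R axis a 1)"
    using s by simp
  have a1: "dist (?D1 (x + \<sigma>1 *\<^sub>R axis a 1 + \<tau>1 *\<^sub>R axis b 1)) (?D1 x) < d/2"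
    using e1(2) inU[of \<sigma>1 \<tau>1 a b] near[of \<sigma>1 \<tau>1 a b] st1 by auto
  have a2: "dist (?D2 (x + \<sigma>2 *\<^sub>R axis b 1 + \<tau>2 *\<^sub>R axis a 1)) (?D2 x) < d/2"
    using e2(2) inU[of \<sigma>2 \<tau>2 b a] near[of \<sigma>2 \<tau>2 b a] st2 by auto
  from a1 a2 eq have "\<bar>?D1 x - ?D2 x\<bar> < d" unfolding dist_real_def by linarith
  then show False using d_def by simp
qed

lemma pd_commute_pds:
  fixes h :: "real^'n \<Rightarrow> real"
  assumes U: "open U" "Cinf_on h U"
  shows "x \<in> U \<Longrightarrow> pd j (pds rest h) x = pds rest (pd j h) x"
proof (induction rest arbitrary: x)
  case Nil then show ?case by simp
next
  case (Cons b rest)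
  have "pd j (pds (b # rest) h) x = pd j (pd b (pds rest h)) x" by simp
  also have "\<dots> = pd b (pd j (pds rest h)) x"
    by (rule clairaut[OF U(1) Cinf_pds[OF U(2)] Cons.prems])
  also have "\<dots> = pd b (pds rest (pd j h)) x"
    by (rule pd_local[OF U(1) Cons.prems]) (use Cons.IH in auto)
  finally show ?case by simp
qed

lemma pds_move_last:
  fixes h :: "real^'n \<Rightarrow> real"
  assumes U: "open U" "Cinf_on h U"
  shows "j \<in> set \<mu> \<Longrightarrow> x \<in> U \<Longrightarrow> pds \<mu> h x = pds (remove1 j \<mu>) (pd j h) x"
proof (induction \<mu> arbitrary: x)
  case Nil then show ?case by simp
next
  case (Cons a rest)
  show ?case
  proof (cases "a = j")
    case True
    then show ?thesis using pd_commute_pds[OF U Cons.prems(2)] by simp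
  next
    case False
    then have "j \<in> set rest" using Cons.prems by simp
    have "pds (a # rest) h x = pd a (pds rest h) x" by simp
    also have "\<dots> = pd a (pds (remove1 j rest) (pd j h)) x"
      by (rule pd_local[OF U(1) Cons.prems(2)]) (use Cons.IH \<open>j \<in> set rest\<close> in auto)
    finally show ?thesis using False by simp
  qed
qed



definition step :: "('n \<Rightarrow> nat) \<Rightarrow> 'n \<Rightarrow> real \<times> ('n \<Rightarrow> nat) \<times> 'n list \<Rightarrow> (real \<times> ('n \<Rightarrow> nat) \<times> 'n list) list" where
  "step n j t = (case t of (c, \<beta>, \<mu>) \<Rightarrow>
     [(c * real (\<beta> j), \<beta>(j := \<beta> j - 1), \<mu>), (c * real (n j), \<beta>(j := \<beta> j + n j - 1), j # \<mu>)])"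

fun terms :: "('n \<Rightarrow> nat) \<Rightarrow> 'n list \<Rightarrow> (real \<times> ('n \<Rightarrow> nat) \<times> 'n list) list" where
  "terms n [] = [(1, \<lambda>_. 0, [])]"
| "terms n (j # js) = concat (map (step n j) (terms n js))"

definition val :: "('n::finite \<Rightarrow> nat) \<Rightarrow> (real^'n \<Rightarrow> real) \<Rightarrow> real \<times> ('n \<Rightarrow> nat) \<times> 'n list \<Rightarrow> real^'n \<Rightarrow> real" where
  "val n f t y = (case t of (c, \<beta>, \<mu>) \<Rightarrow> c * (\<Prod>i\<in>UNIV. (y$i) ^ \<beta> i) * pds \<mu> f (phi n y))"

lemma prod_upd:
  fixes y :: "real^'n"
  shows "(\<Prod>i\<in>UNIV. (y$i) ^ (\<beta>(j := v)) i) = y$j ^ v * (\<Prod>i\<in>UNIV-{j}. (y$i) ^ \<beta> i)"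
proof -
  have "(\<Prod>i\<in>UNIV. (y$i) ^ (\<beta>(j := v)) i) = y$j ^ v * (\<Prod>i\<in>UNIV-{j}. (y$i) ^ (\<beta>(j := v)) i)"
    by (subst prod.remove[of UNIV j]) auto
  also have "(\<Prod>i\<in>UNIV-{j}. (y$i) ^ (\<beta>(j := v)) i) = (\<Prod>i\<in>UNIV-{j}. (y$i) ^ \<beta> i)"
    by (rule prod.cong) auto
  finally show ?thesis .
qed

lemma prod_split:
  fixes y :: "real^'n"
  shows "(\<Prod>i\<in>UNIV. (y$i) ^ \<beta> i) = y$j ^ \<beta> j * (\<Prod>i\<in>UNIV-{j}. (y$i) ^ \<beta> i)"
  using prod_upd[of y \<beta> j "\<beta> j"] by simp

lemma prod_shift:
  fixes y :: "real^'n"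
  shows "(\<Prod>i\<in>UNIV. ((y + s *\<^sub>R axis j 1)$i) ^ \<beta> i) = (y$j + s) ^ \<beta> j * (\<Prod>i\<in>UNIV-{j}. (y$i) ^ \<beta> i)"
proof -
  have "(\<Prod>i\<in>UNIV. ((y + s *\<^sub>R axis j 1)$i) ^ \<beta> i) = (y$j + s) ^ \<beta> j * (\<Prod>i\<in>UNIV-{j}. ((y + s *\<^sub>R axis j 1)$i) ^ \<beta> i)"
    by (subst prod.remove[of UNIV j]) (auto simp: axis_def)
  also have "(\<Prod>i\<in>UNIV-{j}. ((y + s *\<^sub>R axis j 1)$i) ^ \<beta> i) = (\<Prod>i\<in>UNIV-{j}. (y$i) ^ \<beta> i)"
    by (rule prod.cong) (auto simp: axis_def)
  finally show ?thesis .
qed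

lemma phi_shift:
  fixes y :: "real^'n"
  shows "phi n (y + s *\<^sub>R axis j 1) = phi n y + ((y$j + s) ^ n j - y$j ^ n j) *\<^sub>R axis j 1"
  by (simp add: vec_eq_iff phi_def axis_def)

lemma val_deriv:
  fixes y :: "real^'n" and f :: "real^'n \<Rightarrow> real"
  assumes U: "open U" "Cinf_on f U" and y: "phi n y \<in> U" and nj: "n j \<ge> 1"
  shows "((\<lambda>s. val n f (c, \<beta>, \<mu>) (y + s *\<^sub>R axis j 1)) has_real_derivative
           (\<Sum>u\<leftarrow>step n j (c, \<beta>, \<mu>). val n f u y)) (at 0)"
proof -
  define R where "R = (\<Prod>i\<in>UNIV-{j}. (y$i) ^ \<beta> i)"
  define g where "g u = pds \<mu> f (phi n y + u *\<^sub>R axis j 1)" for u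
  define h where "h s = (y$j + s) ^ n j - y$j ^ n j" for s
  define Da where "Da = pd j (pds \<mu> f) (phi n y)"
  have fun_eq: "(\<lambda>s. val n f (c, \<beta>, \<mu>) (y + s *\<^sub>R axis j 1)) = (\<lambda>s. c * ((y$j + s) ^ \<beta> j * R) * (g \<circ> h) s)"
    unfolding val_def prod_shift phi_shift by (rule ext) (simp add: R_def g_def h_def)
  have dg: "(g has_real_derivative Da) (at (h 0))"
    unfolding g_def Da_def h_def using pd_has_deriv[OF cinf_diff[OF U(2) y]] by simp
  have dh: "(h has_real_derivative (real (n j) * (y$j + 0) ^ (n j - 1))) (at 0)"
    unfolding h_def by (auto intro!: derivative_eq_intros)
  have dgh: "((g \<circ> h) has_real_derivative Da * (real (n j) * (y$j + 0) ^ (n j - 1))) (at 0)"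
    by (rule DERIV_chain[OF dg dh])
  have dp: "((\<lambda>s. (y$j + s) ^ \<beta> j * R) has_real_derivative (real (\<beta> j) * (y$j + 0) ^ (\<beta> j - 1) * 1 * R)) (at 0)"
    by (auto intro!: derivative_eq_intros)
  have d: "((\<lambda>s. c * ((y$j + s) ^ \<beta> j * R) * (g \<circ> h) s) has_real_derivative
       c * ((real (\<beta> j) * (y$j + 0) ^ (\<beta> j - 1) * 1 * R) * (g \<circ> h) 0 + ((y$j + 0) ^ \<beta> j * R) * (Da * (real (n j) * (y$j + 0) ^ (n j - 1))))) (at 0)"
    using DERIV_cmult[OF DERIV_mult[OF dp dgh], of c] by (simp add: algebra_simps)
  have gh0: "(g \<circ> h) 0 = pds \<mu> f (phi n y)" by (simp add: g_def h_def)
  have gh0': "g (h 0) = pds \<mu> f (phi n y)" by (simp add: g_def h_def)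
  have pw: "y$j ^ \<beta> j * y$j ^ (n j - Suc 0) = y$j ^ (\<beta> j + n j - Suc 0)"
    using nj by (simp add: power_add[symmetric])
  have "c * ((real (\<beta> j) * (y$j + 0) ^ (\<beta> j - 1) * 1 * R) * (g \<circ> h) 0 + ((y$j + 0) ^ \<beta> j * R) * (Da * (real (n j) * (y$j + 0) ^ (n j - 1))))
      = (\<Sum>u\<leftarrow>step n j (c, \<beta>, \<mu>). val n f u y)"
  proof -
    have e: "(\<Sum>u\<leftarrow>step n j (c, \<beta>, \<mu>). val n f u y) = c * real (\<beta> j) * (y$j ^ (\<beta> j - 1) * R) * pds \<mu> f (phi n y)
       + c * real (n j) * (y$j ^ (\<beta> j + n j - 1) * R) * Da"
      by (simp add: step_def val_def Da_def R_def prod_upd del: fun_upd_apply)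
    show ?thesis unfolding e by (simp add: gh0' pw[symmetric] algebra_simps)
  qed
  with d fun_eq show ?thesis by simp
qed

lemma DERIV_sum_list:
  assumes "\<forall>t\<in>set L. ((\<lambda>s. F t s) has_real_derivative F' t) (at x)"
  shows "((\<lambda>s. \<Sum>t\<leftarrow>L. F t s) has_real_derivative (\<Sum>t\<leftarrow>L. F' t)) (at x)"
  using assms
proof (induction L)
  case Nil then show ?case by simp
next
  case (Cons a L) then show ?case by (auto intro: DERIV_add)
qed

lemma sum_list_concat_map:
  "(\<Sum>u\<leftarrow>concat (map g L). F u) = (\<Sum>t\<leftarrow>L. \<Sum>u\<leftarrow>g t. F u)"
  by (induction L) auto

lemma sum_deriv:
  fixes y :: "real^'n" and f :: "real^'n \<Rightarrow> real"
  assumes U: "open U" "Cinf_on f U" and y: "phi n y \<in> U" and nj: "n j \<ge> 1"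
  shows "((\<lambda>s. \<Sum>t\<leftarrow>L. val n f t (y + s *\<^sub>R axis j 1)) has_real_derivative
           (\<Sum>u\<leftarrow>concat (map (step n j) L). val n f u y)) (at 0)"
  unfolding sum_list_concat_map
  by (rule DERIV_sum_list) (use val_deriv[OF U y nj] in auto)

lemma rep:
  fixes f :: "real^'n \<Rightarrow> real"
  assumes U: "open U" "Cinf_on f U" and V: "open V" "\<forall>y\<in>V. phi n y \<in> U" and n: "\<forall>i. n i \<ge> 1"
  shows "\<forall>y\<in>V. pds js (f \<circ> phi n) y = (\<Sum>t\<leftarrow>terms n js. val n f t y)"
proof (induction js)
  case Nil then show ?case by (simp add: val_def)
next
  case (Cons j js)
  show ?case
  proof
    fix y assume y: "y \<in> V"
    have "pds (j # js) (f \<circ> phi n) y = pd j (pds js (f \<circ> phi n)) y" by simp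
    also have "\<dots> = pd j (\<lambda>z. \<Sum>t\<leftarrow>terms n js. val n f t z) y"
      by (rule pd_local[OF V(1) y]) (use Cons.IH in blast)
    also have "\<dots> = (\<Sum>u\<leftarrow>terms n (j # js). val n f u y)"
      unfolding pd_def using sum_deriv[OF U V(2)[rule_format, OF y] n[rule_format, of j], of "terms n js"]
      by (simp add: DERIV_imp_deriv)
    finally show "pds (j # js) (f \<circ> phi n) y = (\<Sum>t\<leftarrow>terms n (j # js). val n f t y)" .
  qed
qed



lemma terms_inv:
  assumes n: "\<forall>i. n i \<ge> 1"
  shows "(c, \<beta>, \<mu>) \<in> set (terms n js) \<Longrightarrow> c \<ge> 0 \<and> length \<mu> \<le> length js \<and>
          (c \<noteq> 0 \<longrightarrow> (\<forall>i. \<beta> i + count_list js i = count_list \<mu> i * n i))"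
proof (induction js arbitrary: c \<beta> \<mu>)
  case Nil then show ?case by auto
next
  case (Cons j js)
  from Cons.prems obtain c0 \<beta>0 \<mu>0 where t0: "(c0, \<beta>0, \<mu>0) \<in> set (terms n js)"
    and u: "(c, \<beta>, \<mu>) \<in> set (step n j (c0, \<beta>0, \<mu>0))" by auto
  note IH = Cons.IH[OF t0]
  from u have "(c = c0 * real (\<beta>0 j) \<and> \<beta> = \<beta>0(j := \<beta>0 j - 1) \<and> \<mu> = \<mu>0) \<or>
     (c = c0 * real (n j) \<and> \<beta> = \<beta>0(j := \<beta>0 j + n j - 1) \<and> \<mu> = j # \<mu>0)"
    by (auto simp: step_def)
  then show ?case
  proof
    assume h: "c = c0 * real (\<beta>0 j) \<and> \<beta> = \<beta>0(j := \<beta>0 j - 1) \<and> \<mu> = \<mu>0"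
    show ?thesis
    proof (intro conjI impI allI)
      show "c \<ge> 0" using h IH by simp
      show "length \<mu> \<le> length (j # js)" using h IH by simp
      fix i assume "c \<noteq> 0"
      then have "c0 \<noteq> 0" "\<beta>0 j \<noteq> 0" using h by auto
      then show "\<beta> i + count_list (j # js) i = count_list \<mu> i * n i"
        using h IH by auto
    qed
  next
    assume h: "c = c0 * real (n j) \<and> \<beta> = \<beta>0(j := \<beta>0 j + n j - 1) \<and> \<mu> = j # \<mu>0"
    show ?thesis
    proof (intro conjI impI allI)
      show "c \<ge> 0" using h IH by simp
      show "length \<mu> \<le> length (j # js)" using h IH by simp
      fix i assume "c \<noteq> 0"
      then have c0: "c0 \<noteq> 0" using h by auto
      have nj: "n j \<ge> 1" using n by simp
      show "\<beta> i + count_list (j # js) i = count_list \<mu> i * n i"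
      proof (cases "i = j")
        case True
        then show ?thesis using h IH c0 nj by (auto simp: algebra_simps)
      next
        case False
        then show ?thesis using h IH c0 by auto
      qed
    qed
  qed
qed

definition w :: "real \<Rightarrow> real \<Rightarrow> nat \<Rightarrow> real" where
  "w A C m = A ^ (m - 1) * fact (m - 1) powr (C + 1)"

lemma w_nonneg: "A \<ge> 0 \<Longrightarrow> w A C m \<ge> 0"
  unfolding w_def by simp

lemma wstep:
  assumes A: "A \<ge> 1" and C: "C \<ge> 0" and m: "m \<le> K"
  shows "real m * w A C m + w A C (Suc m) \<le> 2 * A * real (Suc K) powr (C + 1) * w A C m"
proof (cases "m = 0")
  case True
  have "1 \<le> real (Suc K) powr (C + 1)" by (rule ge_one_powr_ge_zero) (use C in auto)
  then have "1 * 1 \<le> A * real (Suc K) powr (C + 1)" using A by (intro mult_mono) auto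
  then have "1 \<le> 2 * A * real (Suc K) powr (C + 1)" by simp
  then show ?thesis using True by (simp add: w_def)
next
  case False
  have wm: "w A C m \<ge> 0" using w_nonneg A by simp
  have fm: "(fact m :: real) = real m * fact (m - 1)" using False fact_reduce[of m] by simp
  have ws: "w A C (Suc m) = A * real m powr (C + 1) * w A C m"
  proof -
    have "w A C (Suc m) = A ^ m * (real m * fact (m - 1)) powr (C + 1)"
      by (simp add: w_def fm)
    also have "\<dots> = A ^ m * (real m powr (C + 1) * fact (m - 1) powr (C + 1))"
      by (simp add: powr_mult)
    also have "A ^ m = A * A ^ (m - 1)" using False by (metis power_eq_if)
    finally show ?thesis by (simp add: w_def algebra_simps)
  qed
  have m1: "real m \<le> real m powr (C + 1)"
    using powr_mono[of 1 "C + 1" "real m"] C False by simp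
  have m2: "real m powr (C + 1) \<le> real (Suc K) powr (C + 1)"
    by (rule powr_mono2) (use C m in auto)
  have "real m * w A C m \<le> A * real m powr (C + 1) * w A C m"
  proof (rule mult_right_mono[OF _ wm])
    have "1 * real m powr (C + 1) \<le> A * real m powr (C + 1)" by (rule mult_right_mono) (use A in auto)
    then show "real m \<le> A * real m powr (C + 1)" using m1 by simp
  qed
  then have "real m * w A C m + w A C (Suc m) \<le> 2 * A * real m powr (C + 1) * w A C m"
    unfolding ws by (simp add: algebra_simps)
  also have "\<dots> \<le> 2 * A * real (Suc K) powr (C + 1) * w A C m"
    by (intro mult_right_mono mult_left_mono m2 wm) (use A in auto)
  finally show ?thesis .
qed



lemma step_term_bound:
  assumes A: "A \<ge> 1" and C: "C \<ge> 0" and N: "\<forall>i. real (n i) \<le> N"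
    and inv: "c \<ge> 0" "length \<mu> \<le> K" "c \<noteq> 0 \<longrightarrow> (\<forall>i. \<beta> i + count_list js i = count_list \<mu> i * n i)"
  shows "(\<Sum>u\<leftarrow>step n j (c, \<beta>, \<mu>). fst u * w A C (length (snd (snd u))))
          \<le> 2 * A * real (Suc K) powr (C + 1) * N * (c * w A C (length \<mu>))"
proof -
  let ?m = "length \<mu>"
  have wm: "w A C ?m \<ge> 0" "w A C (Suc ?m) \<ge> 0" using w_nonneg A by auto
  have e: "(\<Sum>u\<leftarrow>step n j (c, \<beta>, \<mu>). fst u * w A C (length (snd (snd u))))
     = c * real (\<beta> j) * w A C ?m + c * real (n j) * w A C (Suc ?m)"
    by (simp add: step_def)
  have b: "c * real (\<beta> j) \<le> c * (real ?m * N)"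
  proof (cases "c = 0")
    case False
    then have "\<beta> j \<le> count_list \<mu> j * n j" using inv(3) by (metis le_add1)
    also have "\<dots> \<le> ?m * n j" by (simp add: count_le_length)
    finally have "real (\<beta> j) \<le> real ?m * real (n j)" by (metis of_nat_le_iff of_nat_mult)
    also have "\<dots> \<le> real ?m * N" using N by (simp add: mult_left_mono)
    finally show ?thesis using inv(1) by (simp add: mult_left_mono)
  qed simp
  have b2: "c * real (n j) \<le> c * N" using N inv(1) by (simp add: mult_left_mono)
  have "c * real (\<beta> j) * w A C ?m + c * real (n j) * w A C (Suc ?m)
      \<le> c * (real ?m * N) * w A C ?m + c * N * w A C (Suc ?m)"
    by (intro add_mono mult_right_mono b b2 wm)
  also have "\<dots> = c * N * (real ?m * w A C ?m + w A C (Suc ?m))" by (simp add: algebra_simps)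
  also have "\<dots> \<le> c * N * (2 * A * real (Suc K) powr (C + 1) * w A C ?m)"
  proof (rule mult_left_mono[OF wstep[OF A C inv(2)]])
    show "0 \<le> c * N" using inv(1) N by (metis mult_nonneg_nonneg of_nat_0_le_iff order_trans)
  qed
  finally show ?thesis unfolding e by (simp add: algebra_simps)
qed

lemma wsum:
  assumes A: "A \<ge> 1" and C: "C \<ge> 0" and n: "\<forall>i. n i \<ge> 1" and N: "\<forall>i. real (n i) \<le> N"
  shows "(\<Sum>t\<leftarrow>terms n js. fst t * w A C (length (snd (snd t)))) \<le> (2 * N * A) ^ length js * fact (length js) powr (C + 1)"
proof (induction js)
  case Nil then show ?case by (simp add: w_def)
next
  case (Cons j js)
  let ?K = "length js"
  let ?M = "2 * A * real (Suc ?K) powr (C + 1) * N"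
  have N0: "N \<ge> 0" using N by (metis of_nat_0_le_iff order_trans)
  have M0: "?M \<ge> 0" using A N0 by simp
  have "(\<Sum>t\<leftarrow>terms n (j # js). fst t * w A C (length (snd (snd t))))
     = (\<Sum>t\<leftarrow>terms n js. \<Sum>u\<leftarrow>step n j t. fst u * w A C (length (snd (snd u))))"
    by (simp add: sum_list_concat_map)
  also have "\<dots> \<le> (\<Sum>t\<leftarrow>terms n js. ?M * (fst t * w A C (length (snd (snd t)))))"
  proof (rule sum_list_mono)
    fix t assume t: "t \<in> set (terms n js)"
    obtain c \<beta> \<mu> where tt: "t = (c, \<beta>, \<mu>)" by (cases t) auto
    note inv = terms_inv[OF n, of c \<beta> \<mu> js] t tt
    show "(\<Sum>u\<leftarrow>step n j t. fst u * w A C (length (snd (snd u)))) \<le> ?M * (fst t * w A C (length (snd (snd t))))"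
      unfolding tt using step_term_bound[OF A C N, of c \<mu> ?K \<beta> js j] inv by simp
  qed
  also have "\<dots> = ?M * (\<Sum>t\<leftarrow>terms n js. fst t * w A C (length (snd (snd t))))"
    by (rule sum_list_const_mult)
  also have "\<dots> \<le> ?M * ((2 * N * A) ^ ?K * fact ?K powr (C + 1))"
    by (rule mult_left_mono[OF Cons.IH M0])
  also have "\<dots> = (2 * N * A) ^ length (j # js) * fact (length (j # js)) powr (C + 1)"
  proof -
    have "(fact (Suc ?K) :: real) powr (C + 1) = real (Suc ?K) powr (C + 1) * fact ?K powr (C + 1)"
      by (simp add: powr_mult del: of_nat_Suc)
    then show ?thesis by (simp add: algebra_simps del: of_nat_Suc)
  qed
  finally show ?case .
qed

lemma count_remove1:
  "count_list (remove1 j \<mu>) i + (if i = j \<and> j \<in> set \<mu> then 1 else 0) = count_list \<mu> i"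
  by (induction \<mu>) auto



lemma key_ineq:
  fixes y :: "real^'n"
  assumes y: "\<forall>i. 0 < y$i \<and> y$i < 1"
    and inv: "\<forall>i. \<beta> i + count_list js i = count_list \<mu> i * n i"
    and j: "j \<in> set \<mu>" "\<forall>i\<in>set \<mu>. y$j \<le> y$i"
    and len: "length js \<le> n j"
  shows "(\<Prod>i\<in>UNIV. (y$i) ^ \<beta> i) \<le> (\<Prod>i\<in>UNIV. (phi n y $ i) ^ count_list (remove1 j \<mu>) i)"
proof -
  let ?P = "\<Prod>i\<in>UNIV. (y$i) ^ \<beta> i"
  let ?Q = "\<Prod>i\<in>UNIV. (phi n y $ i) ^ count_list (remove1 j \<mu>) i"
  let ?Kp = "\<Prod>i\<in>UNIV. (y$i) ^ count_list js i"
  have yj: "0 < y$j" "y$j < 1" using y by auto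
  have P0: "?P \<ge> 0" by (intro prod_nonneg zero_le_power) (use y in \<open>auto simp: less_imp_le\<close>)
  have eq1: "?P * ?Kp = (\<Prod>i\<in>UNIV. (y$i ^ n i) ^ count_list \<mu> i)"
  proof -
    have "?P * ?Kp = (\<Prod>i\<in>UNIV. (y$i) ^ (\<beta> i + count_list js i))"
      by (simp add: prod.distrib[symmetric] power_add)
    also have "\<dots> = (\<Prod>i\<in>UNIV. (y$i ^ n i) ^ count_list \<mu> i)"
      using inv by (simp add: power_mult[symmetric] mult.commute)
    finally show ?thesis .
  qed
  have eq2: "(\<Prod>i\<in>UNIV. (y$i ^ n i) ^ count_list \<mu> i) = ?Q * y$j ^ n j"
  proof -
    have "(\<Prod>i\<in>UNIV. (y$i ^ n i) ^ count_list \<mu> i)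
        = (\<Prod>i\<in>UNIV. (y$i ^ n i) ^ count_list (remove1 j \<mu>) i * (if i = j then y$i ^ n i else 1))"
    proof (rule prod.cong[OF refl])
      fix i
      have cj: "count_list \<mu> j > 0" using j(1) count_list_0_iff by (metis gr0I)
      have "count_list \<mu> i = count_list (remove1 j \<mu>) i + (if i = j then 1 else 0)"
        using count_remove1[of j \<mu> i] j(1) by simp
      then show "(y$i ^ n i) ^ count_list \<mu> i = (y$i ^ n i) ^ count_list (remove1 j \<mu>) i * (if i = j then y$i ^ n i else 1)"
        using cj power_minus_mult[of "count_list \<mu> j" "y$j ^ n j"] by (cases "i = j") simp_all
    qed
    also have "\<dots> = ?Q * y$j ^ n j"
      by (simp add: prod.distrib phi_def)
    finally show ?thesis .
  qed
  have ineq: "y$j ^ n j \<le> ?Kp"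
  proof -
    have "y$j ^ n j \<le> y$j ^ length js" by (rule power_decreasing[OF len]) (use yj in auto)
    also have "y$j ^ length js = (\<Prod>i\<in>UNIV. y$j ^ count_list js i)"
      using sum_count_set[of js UNIV] by (simp add: power_sum[symmetric])
    also have "\<dots> \<le> ?Kp"
    proof (rule prod_mono)
      fix i :: 'n
      show "0 \<le> y$j ^ count_list js i \<and> y$j ^ count_list js i \<le> y$i ^ count_list js i"
      proof (cases "count_list js i = 0")
        case False
        then have "count_list \<mu> i * n i > 0" using inv by (metis add_gr_0 not_gr0)
        then have "count_list \<mu> i \<noteq> 0" by auto
        then have "i \<in> set \<mu>" using count_list_0_iff by metis
        then have "y$j \<le> y$i" using j(2) by auto
        then show ?thesis using yj by (auto intro: power_mono)
      qed simp
    qed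
    finally show ?thesis .
  qed
  have "?P * y$j ^ n j \<le> ?P * ?Kp" by (rule mult_left_mono[OF ineq P0])
  also have "\<dots> = ?Q * y$j ^ n j" using eq1 eq2 by simp
  finally show ?thesis using yj by (metis mult_le_cancel_right zero_less_power not_less)
qed



lemma term_bound:
  fixes y :: "real^'n" and f :: "real^'n \<Rightarrow> real"
  assumes A: "A \<ge> 1" and B: "B > 0" and C: "C \<ge> 0" and U: "open U"
    and wm: "weakly_mild A B C U f" and wmi: "\<forall>i. weakly_mild A B C U (pd i f)"
    and y: "\<forall>i. 0 < y$i \<and> y$i < 1" and yU: "phi n y \<in> U"
    and t: "(c, \<beta>, \<mu>) \<in> set (terms n js)" and len: "length js \<le> r"
    and nr: "\<forall>i. n i \<ge> r" and n1: "\<forall>i. n i \<ge> 1"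
  shows "\<bar>val n f (c, \<beta>, \<mu>) y\<bar> \<le> c * (B powr (C + 1) * w A C (length \<mu>))"
proof -
  note inv = terms_inv[OF n1 t]
  let ?P = "\<Prod>i\<in>UNIV. (y$i) ^ \<beta> i"
  let ?x = "phi n y"
  let ?B = "B powr (C + 1)"
  have P0: "?P > 0" by (intro prod_pos zero_less_power) (use y in auto)
  have P1: "?P \<le> 1" by (intro prod_le_1 conjI zero_le_power power_le_one) (use y in \<open>auto simp: less_imp_le\<close>)
  have c0: "c \<ge> 0" using inv by simp
  have vabs: "\<bar>val n f (c, \<beta>, \<mu>) y\<bar> = c * ?P * \<bar>pds \<mu> f ?x\<bar>"
    using c0 P0 by (simp add: val_def abs_mult)
  show ?thesis
  proof (cases "c = 0")
    case True then show ?thesis using vabs by simp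
  next
    case cne: False
    have cinf: "Cinf_on f U" using wm unfolding weakly_mild_def by simp
    show ?thesis
    proof (cases "\<mu> = []")
      case True
      have wmb: "\<And>is. \<bar>pds is f ?x\<bar> \<le> ?B * A ^ length is * fact (length is) powr (C + 1) / (\<Prod>i\<in>UNIV. (?x $ i) ^ count_list is i)"
        using wm yU unfolding weakly_mild_def by blast
      have fb: "\<bar>f ?x\<bar> \<le> ?B" using wmb[of "[]"] by simp
      have "c * ?P * \<bar>f ?x\<bar> \<le> c * 1 * ?B"
        by (intro mult_mono mult_left_mono P1 fb c0) (use P0 c0 in auto)
      then show ?thesis using vabs True by (simp add: w_def)
    next
      case False
      define S where "S = (\<lambda>i. y$i) ` set \<mu>"
      have S: "finite S" "S \<noteq> {}" using False S_def by auto
      obtain j where j: "j \<in> set \<mu>" "y$j = Min S" using Min_in[OF S] S_def by auto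
      have jmin: "\<forall>i\<in>set \<mu>. y$j \<le> y$i" using j S S_def by auto
      let ?\<mu>' = "remove1 j \<mu>"
      let ?Q = "\<Prod>i\<in>UNIV. (?x $ i) ^ count_list ?\<mu>' i"
      have Q0: "?Q > 0" by (intro prod_pos zero_less_power) (use y in \<open>auto simp: phi_def\<close>)
      have lm: "length ?\<mu>' = length \<mu> - 1" using j(1) by (simp add: length_remove1)
      have hp: "pds \<mu> f ?x = pds ?\<mu>' (pd j f) ?x" by (rule pds_move_last[OF U cinf j(1) yU])
      have "\<bar>pds ?\<mu>' (pd j f) ?x\<bar> \<le> ?B * A ^ length ?\<mu>' * fact (length ?\<mu>') powr (C + 1) / ?Q"
        using wmi yU unfolding weakly_mild_def by blast
      then have pb: "\<bar>pds \<mu> f ?x\<bar> \<le> ?B * w A C (length \<mu>) / ?Q"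
        using hp lm by (simp add: w_def)
      have key: "?P \<le> ?Q"
        by (rule key_ineq[OF y _ j(1) jmin]) (use inv cne len nr order_trans in blast)+
      have bw: "?B * w A C (length \<mu>) \<ge> 0" using w_nonneg[of A C] A by simp
      have "c * ?P * \<bar>pds \<mu> f ?x\<bar> \<le> c * ?P * (?B * w A C (length \<mu>) / ?Q)"
        by (rule mult_left_mono[OF pb]) (use c0 P0 in simp)
      also have "\<dots> = c * (?B * w A C (length \<mu>)) * (?P / ?Q)" by simp
      also have "\<dots> \<le> c * (?B * w A C (length \<mu>)) * 1"
        by (rule mult_left_mono) (use key Q0 c0 bw in auto)
      finally show ?thesis using vabs by simp
    qed
  qed
qed



lemma cont_sum_list:
  fixes F :: "'a \<Rightarrow> 'b::topological_space \<Rightarrow> real"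
  assumes "\<forall>t\<in>set L. continuous_on V (F t)"
  shows "continuous_on V (\<lambda>y. \<Sum>t\<leftarrow>L. F t y)"
  using assms
proof (induction L)
  case Nil then show ?case by simp
next
  case (Cons a L)
  have h1: "continuous_on V (\<lambda>y. F a y)" using Cons.prems by simp
  have h2: "continuous_on V (\<lambda>y. \<Sum>t\<leftarrow>L. F t y)" using Cons by simp
  show ?case using continuous_on_add[OF h1 h2] by simp
qed

theorem mainTheorem9:
  fixes A B C :: real and U :: "(real^'n::finite) set" and f :: "real^'n \<Rightarrow> real"
    and r :: nat and n :: "'n \<Rightarrow> nat"
  assumes "A \<ge> 1" and "B > 0" and "C \<ge> 0"
    and "open U" and "U \<subseteq> box 0 (\<chi> i. 1)"
    and "weakly_mild A B C U f"
    and "\<forall>i. weakly_mild A B C U (pd i f)"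
    and "r > 0" and "\<forall>i. n i \<ge> r"
  shows "mild_upto (real (Max (range n)) * A * (real CARD('n) + 1) powr (C + 1)) B C r
           {x \<in> box 0 (\<chi> i. 1). phi n x \<in> U} (f \<circ> phi n)"
proof -
  note A = assms(1) and B = assms(2) and C = assms(3) and U = assms(4)
    and wm = assms(6) and wmi = assms(7) and nr = assms(9)
  define V where "V = {x \<in> box 0 (\<chi> i. 1). phi n x \<in> U}"
  define N where "N = real (Max (range n))"
  have n1: "\<forall>i. n i \<ge> 1" using assms(8,9) by (metis One_nat_def Suc_leI order_trans)
  have N: "\<forall>i. real (n i) \<le> N" unfolding N_def by simp
  have N0: "N \<ge> 0" unfolding N_def by simp
  have cinf: "Cinf_on f U" using wm unfolding weakly_mild_def by simp
  have cphi: "continuous_on UNIV (phi n)" unfolding phi_def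
    by (intro continuous_on_vec_lambda continuous_intros)
  have Vopen: "open V"
  proof -
    have "V = box 0 (\<chi> i. 1) \<inter> phi n -` U" unfolding V_def by auto
    then show ?thesis using open_vimage[OF U cphi] open_box by (metis open_Int)
  qed
  have VU: "\<forall>y\<in>V. phi n y \<in> U" unfolding V_def by simp
  have ybox: "\<forall>i. 0 < y$i \<and> y$i < 1" if "y \<in> V" for y
    using that unfolding V_def by (simp add: mem_box_cart)
  have repr: "\<forall>y\<in>V. pds js (f \<circ> phi n) y = (\<Sum>t\<leftarrow>terms n js. val n f t y)" for js
    by (rule rep[OF U cinf Vopen VU n1])
  have contv: "continuous_on V (val n f t)" for t
  proof -
    obtain c \<beta> \<mu> where tt: "t = (c, \<beta>, \<mu>)" by (cases t) auto
    have c1: "continuous_on V (\<lambda>y. pds \<mu> f (phi n y))"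
      by (rule continuous_on_compose2[OF cinf_cont[OF cinf] continuous_on_subset[OF cphi]]) (use VU in auto)
    have "continuous_on V (\<lambda>y. c * (\<Prod>i\<in>UNIV. (y$i) ^ \<beta> i) * pds \<mu> f (phi n y))"
      by (intro continuous_intros c1)
    then show ?thesis unfolding tt val_def by simp
  qed
  have ck: "Ck_on r (f \<circ> phi n) V"
    unfolding Ck_on_def
  proof (intro conjI allI impI)
    fix "is" :: "'n list"
    have "continuous_on V (\<lambda>y. \<Sum>t\<leftarrow>terms n is. val n f t y)"
      by (rule cont_sum_list) (use contv in auto)
    then show "continuous_on V (pds is (f \<circ> phi n))"
      by (rule continuous_on_eq) (use repr in auto)
  next
    fix "is" :: "'n list" and i x
    assume x: "x \<in> V"
    have d: "((\<lambda>s. \<Sum>t\<leftarrow>terms n is. val n f t (x + s *\<^sub>R axis i 1)) has_real_derivative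
           (\<Sum>u\<leftarrow>concat (map (step n i) (terms n is)). val n f u x)) (at 0)"
      by (rule sum_deriv[OF U cinf]) (use VU x n1 in auto)
    have ev: "eventually (\<lambda>s. pds is (f \<circ> phi n) (x + s *\<^sub>R axis i 1) = (\<Sum>t\<leftarrow>terms n is. val n f t (x + s *\<^sub>R axis i 1))) (nhds 0)"
      using ev_in_open[OF Vopen x, of i] by (rule eventually_mono) (use repr in blast)
    have "((\<lambda>s. pds is (f \<circ> phi n) (x + s *\<^sub>R axis i 1)) has_real_derivative
           (\<Sum>u\<leftarrow>concat (map (step n i) (terms n is)). val n f u x)) (at 0)"
      using DERIV_cong_ev[OF refl ev refl] d by simp
    then show "(\<lambda>t. pds is (f \<circ> phi n) (x + t *\<^sub>R axis i 1)) differentiable (at 0)"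
      unfolding real_differentiable_def by blast
  qed
  have bound: "\<bar>pds is (f \<circ> phi n) y\<bar> \<le> B powr (C + 1) * (N * A * (real CARD('n) + 1) powr (C + 1)) ^ length is * fact (length is) powr (C + 1)"
    if len: "length is \<le> r" and y: "y \<in> V" for "is" y
  proof -
    let ?B = "B powr (C + 1)"
    let ?K = "length is"
    have "\<bar>pds is (f \<circ> phi n) y\<bar> = \<bar>\<Sum>t\<leftarrow>terms n is. val n f t y\<bar>" using repr y by simp
    also have "\<dots> \<le> (\<Sum>t\<leftarrow>terms n is. \<bar>val n f t y\<bar>)"
      using sum_list_abs[of "map (\<lambda>t. val n f t y) (terms n is)"] by (simp add: o_def)
    also have "\<dots> \<le> (\<Sum>t\<leftarrow>terms n is. ?B * (fst t * w A C (length (snd (snd t)))))"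
    proof (rule sum_list_mono)
      fix t assume t: "t \<in> set (terms n is)"
      obtain c \<beta> \<mu> where tt: "t = (c, \<beta>, \<mu>)" by (cases t) auto
      show "\<bar>val n f t y\<bar> \<le> ?B * (fst t * w A C (length (snd (snd t))))"
        using term_bound[OF A B C U wm wmi ybox[OF y] VU[rule_format, OF y] t[unfolded tt] len nr n1]
        unfolding tt by (simp add: algebra_simps)
    qed
    also have "\<dots> = ?B * (\<Sum>t\<leftarrow>terms n is. fst t * w A C (length (snd (snd t))))"
      by (rule sum_list_const_mult)
    also have "\<dots> \<le> ?B * ((2 * N * A) ^ ?K * fact ?K powr (C + 1))"
      by (rule mult_left_mono[OF wsum[OF A C n1 N]]) simp
    also have "\<dots> \<le> ?B * ((N * A * (real CARD('n) + 1) powr (C + 1)) ^ ?K * fact ?K powr (C + 1))"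
    proof -
      have "real CARD('n) + 1 \<ge> 2" using finite_UNIV_card_ge_0[where 'a='n] by simp
      moreover have "(real CARD('n) + 1) powr 1 \<le> (real CARD('n) + 1) powr (C + 1)"
        by (rule powr_mono) (use C in auto)
      moreover have "(real CARD('n) + 1) powr 1 = real CARD('n) + 1" by simp
      ultimately have "2 \<le> (real CARD('n) + 1) powr (C + 1)" by linarith
      then have "2 * N * A \<le> N * A * (real CARD('n) + 1) powr (C + 1)"
        using N0 A by (simp add: mult_left_mono mult.commute mult.left_commute)
      then have "(2 * N * A) ^ ?K \<le> (N * A * (real CARD('n) + 1) powr (C + 1)) ^ ?K"
        by (rule power_mono) (use N0 A in simp)
      then show ?thesis by (intro mult_left_mono mult_right_mono) auto
    qed
    finally show ?thesis by (simp add: mult.assoc)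
  qed
  show ?thesis
    unfolding mild_upto_def V_def[symmetric] N_def[symmetric]
    using ck bound by (simp add: mult.assoc)
qed


end
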